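(* Let $n\ge 2$, let $P=[p_1,\ldots,p_n]\neq[n,n-1,\ldots,1]$ be an arithmetically progressed permutation with ratio $k$, and let $\mathsf{T}_P$ be its associated ternary string (so that $\mathsf{SA}_{\mathsf{T}_P}=P$). Let $t\in[1..n]$ be the index with $p_t=(p_1-1-k)\bmod n$. Then for every $i\in[1..n]$, $\mathsf{BWT}_{\mathsf{T}_P}[i]=\mathsf{T}_P[P[(i+t)\bmod n]]$; that is, $\mathsf{BWT}_{\mathsf{T}_P}$ is the $t$-th cyclic rotation of the string $\mathsf{T}_P[p_1]\mathsf{T}_P[p_2]\cdots\mathsf{T}_P[p_n]$.
   Context: Alphabet $\{\mathtt{a}<\mathtt{b}<\mathtt{c}\}$, lexicographic order with a proper prefix smaller than the longer string; suffix array $\mathsf{SA}_{\mathsf{T}}$: permutation of $[1..n]$ such that $\mathsf{T}[\mathsf{SA}_{\mathsf{T}}[i]..n]$ is the $i$-th smallest suffix. $x\bmod n$ denotes the representative of $x$ modulo $n$ in $[1..n]$. An arithmetically progressed permutation of length $n$ with ratio $k\in[1..n-1]$ is a permutation $P=[p_1,\ldots,p_n]$ of $[1..n]$ with $p_{i+1}=p_i+k\bmod n$. Ternary string associated with $P$: cut $P$ immediately after the entry $n-k$ and immediately after the entry $(p_1-k-1)\bmod n$, giving consecutive possibly empty blocks $A,B,C$ with $P=ABC$; set $\mathsf{T}_P[p_i]=\mathtt{a},\mathtt{b},\mathtt{c}$ according as $p_i$ lies in $A$, $B$, $C$. BWT: $\mathsf{BWT}_{\mathsf{T}}[i]=\mathsf{T}[\mathsf{SA}_{\mathsf{T}}[i]-1\bmod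 n]$. *)

theory Defs
  imports Main
begin

datatype tern = ta | tb | tc

definition tern_less :: "(tern \<times> tern) set" where
  "tern_less = {(ta,tb),(ta,tc),(tb,tc)}"

text \<open>Strict lexicographic order on strings; a proper prefix is smaller.\<close>
definition str_less :: "tern list \<Rightarrow> tern list \<Rightarrow> bool" where
  "str_less xs ys \<longleftrightarrow> (xs, ys) \<in> lexord tern_less"

text \<open>x mod n, representative in [1..n].\<close>
definition modn :: "int \<Rightarrow> nat \<Rightarrow> nat" where
  "modn x n = nat ((x - 1) mod int n + 1)"

definition nth1 :: "'a list \<Rightarrow> nat \<Rightarrow> 'a" where
  "nth1 xs i = xs ! (i - 1)"

definition pos1 :: "nat list \<Rightarrow> nat \<Rightarrow> nat" where
  "pos1 P v = Suc (LEAST i. i < length P \<and> P ! i = v)"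

definition ap_perm :: "nat \<Rightarrow> nat \<Rightarrow> nat list \<Rightarrow> bool" where
  "ap_perm n k P \<longleftrightarrow> length P = n \<and> distinct P \<and> set P = {1..n} \<and>
     1 \<le> k \<and> k \<le> n - 1 \<and>
     (\<forall>i. 1 \<le> i \<and> i < n \<longrightarrow> nth1 P (i + 1) = modn (int (nth1 P i) + int k) n)"

text \<open>Ternary string associated with P: cut P right after the entry n-k and right
  after the entry (p1-k-1) mod n, obtaining consecutive blocks A,B,C (P = ABC).\<close>
definition tern_string :: "nat \<Rightarrow> nat \<Rightarrow> nat list \<Rightarrow> tern list" where
  "tern_string n k P =
     (let c1 = pos1 P (n - k);
          c2 = pos1 P (modn (int (nth1 P 1) - int k - 1) n)
      in map (\<lambda>v. let q = pos1 P v in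
                  if q \<le> min c1 c2 then ta else if q \<le> max c1 c2 then tb else tc)
             [1..<n+1])"

definition suffix1 :: "tern list \<Rightarrow> nat \<Rightarrow> tern list" where
  "suffix1 T j = drop (j - 1) T"

definition is_suffix_array :: "tern list \<Rightarrow> nat list \<Rightarrow> bool" where
  "is_suffix_array T SA \<longleftrightarrow> length SA = length T \<and> distinct SA \<and> set SA = {1..length T} \<and>
     (\<forall>i. 1 \<le> i \<and> i < length T \<longrightarrow>
        str_less (suffix1 T (nth1 SA i)) (suffix1 T (nth1 SA (i + 1))))"

definition suffix_array :: "tern list \<Rightarrow> nat list" where
  "suffix_array T = (THE SA. is_suffix_array T SA)"

definition bwt :: "tern list \<Rightarrow> nat \<Rightarrow> tern" where
  "bwt T i = nth1 T (modn (int (nth1 (suffix_array T) i) - 1) (length T))"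

end

theory Submission imports Defs begin

lemma modn_int: "0 < n \<Longrightarrow> int (modn x n) = (x - 1) mod int n + 1"
proof -
  assume n: "0 < n"
  have "0 \<le> (x - 1) mod int n" using n by simp
  thus ?thesis unfolding modn_def by simp
qed

lemma modn_range: "0 < n \<Longrightarrow> 1 \<le> modn x n \<and> modn x n \<le> n"
proof -
  assume n: "0 < n"
  have a: "(x - 1) mod int n < int n" using n by simp
  have b: "0 \<le> (x - 1) mod int n" using n by simp
  have "int (modn x n) = (x - 1) mod int n + 1" using modn_int[OF n] .
  with a b show ?thesis by linarith
qed

lemma modn_dvd: "0 < n \<Longrightarrow> int n dvd (int (modn x n) - x)"
proof -
  assume n: "0 < n"
  have "int (modn x n) - x = (x - 1) mod int n - (x - 1)" using modn_int[OF n] by simp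
  also have "int n dvd \<dots>"
    by (metis dvd_minus_mod minus_diff_eq dvd_minus_iff)
  finally show ?thesis .
qed

lemma modn_eq_iff: "0 < n \<Longrightarrow> modn x n = modn y n \<longleftrightarrow> int n dvd (x - y)"
proof -
  assume n: "0 < n"
  have "modn x n = modn y n \<longleftrightarrow> int (modn x n) = int (modn y n)" by simp
  also have "\<dots> \<longleftrightarrow> (x - 1) mod int n = (y - 1) mod int n" using modn_int[OF n] by simp
  also have "\<dots> \<longleftrightarrow> int n dvd ((x - 1) - (y - 1))" by (rule mod_eq_dvd_iff)
  finally show ?thesis by simp
qed

lemma modn_id: "1 \<le> v \<Longrightarrow> v \<le> n \<Longrightarrow> modn (int v) n = v"
  unfolding modn_def by simp

lemma modn_unique: "0 < n \<Longrightarrow> 1 \<le> v \<Longrightarrow> v \<le> n \<Longrightarrow> int n dvd (int v - x) \<Longrightarrow> modn x n = v"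
  by (metis modn_eq_iff modn_id)


lemma lexA:
  assumes "a + j < length T" "b + j < length T" "\<forall>j'<j. T!(a+j') = T!(b+j')"
    "(T!(a+j), T!(b+j)) \<in> r"
  shows "(drop a T, drop b T) \<in> lexord r"
proof -
  have u: "take j (drop a T) = take j (drop b T)"
    by (rule nth_equalityI) (use assms in auto)
  have A: "drop a T = take j (drop a T) @ (drop a T) ! j # drop (Suc j) (drop a T)"
    by (rule id_take_nth_drop) (use assms in simp)
  have B: "drop b T = take j (drop b T) @ (drop b T) ! j # drop (Suc j) (drop b T)"
    by (rule id_take_nth_drop) (use assms in simp)
  have "(take j (drop a T) @ (drop a T) ! j # drop (Suc j) (drop a T),
         take j (drop a T) @ (drop b T) ! j # drop (Suc j) (drop b T)) \<in> lexord r"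
    by (rule lexord_append_left_rightI) (use assms in simp)
  then show ?thesis using A B u by metis
qed

lemma lexB:
  assumes "b < a" "a \<le> length T" "\<forall>j. a + j < length T \<longrightarrow> T!(a+j) = T!(b+j)"
  shows "(drop a T, drop b T) \<in> lexord r"
proof -
  define m where "m = length T - a"
  have t: "take m (drop b T) = drop a T"
    by (rule nth_equalityI) (use assms in \<open>auto simp: m_def\<close>)
  have d: "drop b T = take m (drop b T) @ drop m (drop b T)" by (rule append_take_drop_id[symmetric])
  have "drop m (drop b T) \<noteq> []" using assms by (simp add: m_def)
  then obtain c z where "drop m (drop b T) = c # z" by (cases "drop m (drop b T)") auto
  hence "(drop a T, drop a T @ drop m (drop b T)) \<in> lexord r"
    by (intro lexord_append_rightI) auto
  thus ?thesis using t d by metis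
qed

lemma sorted_unique:
  assumes "transp R" "\<forall>x. \<not> R x x"
  shows "sorted_wrt R xs \<Longrightarrow> sorted_wrt R ys \<Longrightarrow> distinct xs \<Longrightarrow> distinct ys
    \<Longrightarrow> set xs = set ys \<Longrightarrow> xs = ys"
proof (induction xs arbitrary: ys)
  case Nil thus ?case by simp
next
  case (Cons x xs)
  then obtain y ys' where ys: "ys = y # ys'" by (cases ys) auto
  have "x = y"
  proof (rule ccontr)
    assume ne: "x \<noteq> y"
    hence "y \<in> set xs" "x \<in> set ys'" using Cons.prems ys by auto
    hence "R x y" "R y x" using Cons.prems ys by auto
    thus False using assms by (meson transpD)
  qed
  moreover have "set xs = set ys'" using Cons.prems ys \<open>x = y\<close> by auto
  ultimately show ?case using Cons ys by auto
qed

locale apc =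
  fixes n k :: nat and P :: "nat list"
  assumes n2: "2 \<le> n" and ap: "ap_perm n k P"
begin

lemma len: "length P = n" and dist: "distinct P" and setP: "set P = {1..n}"
  and k1: "1 \<le> k" and kn: "k \<le> n - 1"
  and step: "\<And>i. 1 \<le> i \<Longrightarrow> i < n \<Longrightarrow> nth1 P (i + 1) = modn (int (nth1 P i) + int k) n"
  using ap unfolding ap_perm_def by auto

lemma npos: "0 < n" using n2 by simp

lemma Pstep: "Suc i < n \<Longrightarrow> P ! Suc i = modn (int (P!i) + int k) n"
  using step[of "Suc i"] unfolding nth1_def by simp

lemma Prange: "i < n \<Longrightarrow> 1 \<le> P!i \<and> P!i \<le> n"
  using nth_mem[of i P] len setP by auto

definition "p = P ! 0"

lemma Pform: "i < n \<Longrightarrow> P!i = modn (int p + int i * int k) n"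
proof (induction i)
  case 0 thus ?case using Prange[of 0] modn_id unfolding p_def by simp
next
  case (Suc i)
  hence "P ! Suc i = modn (int (modn (int p + int i * int k) n) + int k) n"
    using Pstep by simp
  also have "\<dots> = modn (int p + int (Suc i) * int k) n"
    using modn_dvd[OF npos, of "int p + int i * int k"]
    by (subst modn_eq_iff[OF npos]) (simp add: algebra_simps)
  finally show ?case .
qed

definition "pos v = pos1 P v"

lemma pos_nth: "j < n \<Longrightarrow> pos (P!j) = Suc j"
  unfolding pos_def pos1_def
  using dist len by (auto intro!: Least_equality simp: nth_eq_iff_index_eq)

lemma pos_props: "1 \<le> v \<Longrightarrow> v \<le> n \<Longrightarrow> 1 \<le> pos v \<and> pos v \<le> n \<and> P!(pos v - 1) = v"
proof -
  assume "1 \<le> v" "v \<le> n"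
  hence "v \<in> set P" using setP by auto
  then obtain j where "j < n" "P!j = v" using len by (auto simp: in_set_conv_nth)
  thus ?thesis using pos_nth by auto
qed

lemma pos_inj: "1 \<le> v \<Longrightarrow> v \<le> n \<Longrightarrow> 1 \<le> w \<Longrightarrow> w \<le> n \<Longrightarrow> pos v = pos w \<Longrightarrow> v = w"
  using pos_props by metis

definition "e1 = n - k"
definition "e2 = modn (int p - int k - 1) n"
definition "e3 = modn (int p - int k) n"
definition "c1 = pos e1"
definition "c2 = pos e2"
definition "g q = (if q \<le> min c1 c2 then ta else if q \<le> max c1 c2 then tb else tc)"
definition "T = tern_string n k P"

lemma T_len: "length T = n"
  unfolding T_def tern_string_def by (simp add: Let_def)

lemma T_eq: "T = map (\<lambda>v. g (pos v)) [1..<n+1]"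
  unfolding T_def tern_string_def g_def c1_def c2_def e1_def e2_def pos_def p_def nth1_def
  by (simp add: Let_def)

lemma T_nth: "1 \<le> v \<Longrightarrow> v \<le> n \<Longrightarrow> T!(v-1) = g (pos v)"
proof -
  assume "1 \<le> v" "v \<le> n"
  hence "[1..<n+1] ! (v - 1) = v" by (subst nth_upt) auto
  thus ?thesis using \<open>1 \<le> v\<close> \<open>v \<le> n\<close> by (simp add: T_eq del: upt_Suc)
qed

lemma e1_range: "1 \<le> e1 \<and> e1 \<le> n" using kn k1 n2 unfolding e1_def by simp
lemma e2_range: "1 \<le> e2 \<and> e2 \<le> n" using modn_range[OF npos] unfolding e2_def by simp

lemma e3_last: "e3 = P!(n-1)"
proof -
  have "P!(n-1) = modn (int p + int (n-1) * int k) n" using Pform npos by simp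
  also have "\<dots> = e3" unfolding e3_def
  proof (subst modn_eq_iff[OF npos])
    have "int p + int (n - 1) * int k - (int p - int k) = int n * int k"
      using npos by (simp add: of_nat_diff algebra_simps)
    thus "int n dvd int p + int (n - 1) * int k - (int p - int k)" by simp
  qed
  finally show ?thesis by simp
qed

lemma e2_e3: "2 \<le> e3 \<Longrightarrow> e2 = e3 - 1"
  unfolding e2_def
proof (rule modn_unique[OF npos])
  assume "2 \<le> e3"
  moreover have "e3 \<le> n" using modn_range[OF npos] unfolding e3_def by simp
  ultimately show "1 \<le> e3 - 1" "e3 - 1 \<le> n" by auto
  have eq: "int (e3 - 1) - (int p - int k - 1) = int e3 - (int p - int k)"
    using \<open>2 \<le> e3\<close> by (simp add: of_nat_diff)
  have d: "int n dvd int e3 - (int p - int k)"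
    unfolding e3_def by (rule modn_dvd[OF npos])
  show "int n dvd int (e3 - 1) - (int p - int k - 1)"
    by (subst eq) (rule d)
qed

lemma letter_step:
  assumes "1 \<le> x" "x \<le> n" "1 \<le> y" "y \<le> n" "int n dvd (int y - int x - int k)" "x \<noteq> e3"
  shows "pos y = Suc (pos x)"
proof -
  define j where "j = pos x - 1"
  have j: "j < n" "P!j = x" "pos x = Suc j" using pos_props[OF assms(1,2)] unfolding j_def by auto
  have "j \<noteq> n - 1" using j assms(6) e3_last by auto
  hence sj: "Suc j < n" using j by simp
  have "P ! Suc j = modn (int x + int k) n" using Pstep[OF sj] j by simp
  also have "\<dots> = y" using assms by (intro modn_unique[OF npos]) (auto simp: algebra_simps)
  finally show ?thesis using pos_nth[OF sj] j by simp
qed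

lemma pos_e1: "1 \<le> x \<Longrightarrow> x \<le> n \<Longrightarrow> pos x = c1 \<longleftrightarrow> x = e1"
  unfolding c1_def using pos_inj e1_range by metis
lemma pos_e2: "1 \<le> x \<Longrightarrow> x \<le> n \<Longrightarrow> pos x = c2 \<longleftrightarrow> x = e2"
  unfolding c2_def using pos_inj e2_range by metis

lemma letter_eq:
  assumes "1 \<le> x" "x \<le> n" "1 \<le> y" "y \<le> n" "int n dvd (int y - int x - int k)" "x \<noteq> e3"
    "x \<noteq> e1" "x \<noteq> e2"
  shows "T!(y-1) = T!(x-1)"
proof -
  have py: "pos y = Suc (pos x)" using letter_step assms by blast
  have "pos x \<noteq> c1" "pos x \<noteq> c2" using pos_e1 pos_e2 assms by auto
  hence "g (Suc (pos x)) = g (pos x)" unfolding g_def by (auto simp: min_def max_def)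
  thus ?thesis using T_nth assms py by simp
qed

lemma letter_less:
  assumes "1 \<le> x" "x \<le> n" "1 \<le> y" "y \<le> n" "int n dvd (int y - int x - int k)" "x \<noteq> e3"
    "x = e1 \<or> x = e2"
  shows "(T!(x-1), T!(y-1)) \<in> tern_less"
proof -
  have py: "pos y = Suc (pos x)" using letter_step assms by blast
  have "pos x = c1 \<or> pos x = c2" using pos_e1 pos_e2 assms by auto
  hence "(g (pos x), g (Suc (pos x))) \<in> tern_less" unfolding g_def tern_less_def
    by (auto simp: min_def max_def)
  thus ?thesis using T_nth assms py by simp
qed


definition "Ev x \<longleftrightarrow> x = e1 \<or> x = e2 \<or> x = e3"

lemma adj:
  assumes si: "Suc i < n"
  shows "str_less (suffix1 T (P!i)) (suffix1 T (P!Suc i))"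
proof -
  define v where "v = P!i"
  define w where "w = P!Suc i"
  have vr: "1 \<le> v" "v \<le> n" using Prange si unfolding v_def by auto
  have wr: "1 \<le> w" "w \<le> n" using Prange si unfolding w_def by auto
  have wdef: "w = modn (int v + int k) n" using Pstep[OF si] unfolding v_def w_def .
  have dvw: "int n dvd (int w - int v - int k)"
    using modn_dvd[OF npos, of "int v + int k"] unfolding wdef[symmetric] by (simp add: algebra_simps)
  have ve3: "v \<noteq> e3" using e3_last dist len si unfolding v_def by (simp add: nth_eq_iff_index_eq)
  have case1: "v \<le> n - k \<Longrightarrow> w = v + k"
    using wdef vr k1 by (metis modn_id add_leD1 le_add2 le_diff_conv2 kn le_trans
        of_nat_add n2 Nat.le_diff_conv2 order_trans)
  have case2: "\<not> v \<le> n - k \<Longrightarrow> w < v"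
  proof -
    assume "\<not> v \<le> n - k"
    hence "v + k - n \<ge> 1" "v + k - n \<le> n" using vr kn by auto
    hence "modn (int v + int k) n = v + k - n"
      using \<open>\<not> v \<le> n - k\<close> by (intro modn_unique[OF npos]) (auto simp: of_nat_diff)
    thus "w < v" using wdef kn n2 vr \<open>\<not> v \<le> n - k\<close> by simp
  qed
  have dvj: "\<And>j. int n dvd (int (w + j) - int (v + j) - int k)" using dvw by simp
  have rng: "\<And>j. w + j \<le> n \<Longrightarrow> v + j \<le> n \<Longrightarrow> v + j - 1 < length T \<and> w + j - 1 < length T"
    using vr wr T_len by auto
  show ?thesis
  proof (cases "\<exists>j. v + j \<le> n \<and> w + j \<le> n \<and> Ev (v + j)")
    case True
    define j0 where "j0 = (LEAST j. v + j \<le> n \<and> w + j \<le> n \<and> Ev (v + j))"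
    have j0: "v + j0 \<le> n" "w + j0 \<le> n" "Ev (v + j0)"
      using LeastI_ex[OF True] unfolding j0_def by auto
    have less: "\<And>j. j < j0 \<Longrightarrow> \<not> (v + j \<le> n \<and> w + j \<le> n \<and> Ev (v + j))"
      unfolding j0_def by (rule not_less_Least)
    have ne3: "v + j0 \<noteq> e3"
    proof
      assume h: "v + j0 = e3"
      hence "j0 \<noteq> 0" using ve3 by auto
      hence "2 \<le> e3" using h vr by auto
      hence "e2 = v + (j0 - 1)" using e2_e3 h \<open>j0 \<noteq> 0\<close> by auto
      hence "v + (j0 - 1) \<le> n \<and> w + (j0 - 1) \<le> n \<and> Ev (v + (j0 - 1))"
        using j0 unfolding Ev_def by auto
      thus False using less[of "j0 - 1"] \<open>j0 \<noteq> 0\<close> by auto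
    qed
    have lt: "(T!(v + j0 - 1), T!(w + j0 - 1)) \<in> tern_less"
      using j0 ne3 vr wr dvj[of j0] by (intro letter_less) (auto simp: Ev_def)
    have eqs: "\<forall>j'<j0. T!(v - 1 + j') = T!(w - 1 + j')"
    proof (intro allI impI)
      fix j' assume "j' < j0"
      hence "v + j' \<le> n" "w + j' \<le> n" "\<not> Ev (v + j')" using less[of j'] j0 by auto
      hence "T!(w + j' - 1) = T!(v + j' - 1)"
        using vr wr dvj[of j'] by (intro letter_eq) (auto simp: Ev_def)
      thus "T!(v - 1 + j') = T!(w - 1 + j')" using vr wr by simp
    qed
    have "(drop (v - 1) T, drop (w - 1) T) \<in> lexord tern_less"
      by (rule lexA[where j = j0]) (use j0 vr wr T_len lt eqs in auto)
    thus ?thesis unfolding str_less_def suffix1_def v_def w_def .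
  next
    case False
    have nc1: "\<not> v \<le> n - k"
    proof
      assume h: "v \<le> n - k"
      hence "w = v + k" by (rule case1)
      hence "v + (n - k - v) \<le> n \<and> w + (n - k - v) \<le> n \<and> Ev (v + (n - k - v))"
        using h kn unfolding Ev_def e1_def by auto
      thus False using False by blast
    qed
    hence wv: "w < v" by (rule case2)
    have eqs: "\<forall>j. v - 1 + j < length T \<longrightarrow> T!(v - 1 + j) = T!(w - 1 + j)"
    proof (intro allI impI)
      fix j assume "v - 1 + j < length T"
      hence "v + j \<le> n" "w + j \<le> n" using T_len vr wv by auto
      moreover hence "\<not> Ev (v + j)" using False by blast
      ultimately have "T!(w + j - 1) = T!(v + j - 1)"
        using vr wr dvj[of j] by (intro letter_eq) (auto simp: Ev_def)
      thus "T!(v - 1 + j) = T!(w - 1 + j)" using vr wr by simp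
    qed
    have "(drop (v - 1) T, drop (w - 1) T) \<in> lexord tern_less"
      by (rule lexB) (use wv vr wr T_len eqs in auto)
    thus ?thesis unfolding str_less_def suffix1_def v_def w_def .
  qed
qed

lemma is_sa: "is_suffix_array T P"
  unfolding is_suffix_array_def
proof (intro conjI allI impI)
  show "length P = length T" using len T_len by simp
  show "distinct P" by (rule dist)
  show "set P = {1..length T}" using setP T_len by simp
  fix i assume "1 \<le> i \<and> i < length T"
  hence "Suc (i - 1) < n" "nth1 P i = P!(i-1)" "nth1 P (i+1) = P!Suc (i-1)"
    using T_len unfolding nth1_def by auto
  thus "str_less (suffix1 T (nth1 P i)) (suffix1 T (nth1 P (i + 1)))" using adj by simp
qed

lemma sa_eq: "suffix_array T = P"
  unfolding suffix_array_def
proof (rule the_equality)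
  show "is_suffix_array T P" by (rule is_sa)
  fix SA assume h: "is_suffix_array T SA"
  define R where "R = (\<lambda>a b. str_less (suffix1 T a) (suffix1 T b))"
  have tr: "trans tern_less" unfolding tern_less_def trans_def by auto
  have transR: "transp R" unfolding R_def str_less_def transp_def
    using lexord_trans tr by blast
  have irr: "\<forall>x. \<not> R x x" unfolding R_def str_less_def
    by (intro allI lexord_irreflexive) (auto simp: tern_less_def)
  have sr: "\<And>xs. is_suffix_array T xs \<Longrightarrow> sorted_wrt R xs"
  proof -
    fix xs assume hx: "is_suffix_array T xs"
    show "sorted_wrt R xs"
      unfolding sorted_wrt_iff_nth_Suc_transp[OF transR]
    proof (intro allI impI)
      fix i assume "Suc i < length xs"
      hence "1 \<le> Suc i \<and> Suc i < length T" "nth1 xs (Suc i) = xs!i" "nth1 xs (Suc i + 1) = xs!Suc i"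
        using hx unfolding is_suffix_array_def nth1_def by auto
      thus "R (xs!i) (xs!Suc i)" using hx unfolding is_suffix_array_def R_def by metis
    qed
  qed
  show "SA = P"
    by (rule sorted_unique[OF transR irr sr[OF h] sr[OF is_sa]])
       (use h is_sa in \<open>auto simp: is_suffix_array_def\<close>)
qed

end


theorem lemma5:
  fixes n k t :: nat and P :: "nat list"
  assumes "n \<ge> 2"
    and "ap_perm n k P"
    and "P \<noteq> rev [1..<n+1]"
    and "t \<in> {1..n}"
    and "nth1 P t = modn (int (nth1 P 1) - 1 - int k) n"
  shows "\<forall>i \<in> {1..n}. bwt (tern_string n k P) i
           = nth1 (tern_string n k P) (nth1 P (modn (int i + int t) n))"
proof -
  interpret apc n k P using assms(1,2) by unfold_locales
  show ?thesis
  proof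
    fix i assume i: "i \<in> {1..n}"
    define m where "m = modn (int i + int t) n"
    have mr: "1 \<le> m" "m \<le> n" using modn_range[OF npos] unfolding m_def by auto
    have tr: "1 \<le> t" "t \<le> n" using assms(4) by auto
    have ir: "1 \<le> i" "i \<le> n" using i by auto
    have Pm: "nth1 P m = modn (int p + int (m - 1) * int k) n"
      using Pform mr unfolding nth1_def by simp
    have Pt: "nth1 P t = modn (int p + int (t - 1) * int k) n"
      using Pform tr unfolding nth1_def by simp
    have P1: "nth1 P 1 = p" unfolding nth1_def p_def by simp
    have B: "int n dvd (int p + int (t - 1) * int k - (int p - 1 - int k))"
      using assms(5) unfolding Pt P1 by (simp add: modn_eq_iff[OF npos])
    have A: "int n dvd (int m - (int i + int t))" unfolding m_def by (rule modn_dvd[OF npos])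
    have Pi: "nth1 P i = modn (int p + int (i - 1) * int k) n"
      using Pform ir unfolding nth1_def by simp
    have C: "int n dvd (int (nth1 P i) - (int p + int (i - 1) * int k))"
      unfolding Pi by (rule modn_dvd[OF npos])
    have eq: "int p + int (m - 1) * int k - (int (nth1 P i) - 1)
      = (int m - (int i + int t)) * int k + (int p + int (t - 1) * int k - (int p - 1 - int k))
        - (int (nth1 P i) - (int p + int (i - 1) * int k))"
      using mr tr ir by (simp add: of_nat_diff algebra_simps)
    have "int n dvd (int p + int (m - 1) * int k - (int (nth1 P i) - 1))"
      unfolding eq by (rule dvd_diff[OF dvd_add[OF dvd_mult2[OF A] B] C])
    hence key: "nth1 P m = modn (int (nth1 P i) - 1) n"
      unfolding Pm by (simp add: modn_eq_iff[OF npos])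
    show "bwt (tern_string n k P) i = nth1 (tern_string n k P) (nth1 P (modn (int i + int t) n))"
      unfolding bwt_def T_def[symmetric] sa_eq T_len m_def[symmetric] key ..
  qed
qed

end
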